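(* Let $G$ be a compact Hausdorff topological group and let $X$ be a Hausdorff topological group on which $G$ acts (continuously) by topological group homomorphisms, such that $X$ is $G$-connected. Then $\mathbf{TC}_G(X)=\mathrm{cat}_G(X)$.
   Context: $X$ is $G$-connected if $X^H=\{x: hx=x\ \forall h\in H\}$ is path-connected for every closed subgroup $H\le G$. A $G$-homotopy is an equivariant homotopy with trivial action on $I$. An invariant set is $G$-categorical if its inclusion is $G$-homotopic to a map into a single orbit; $\mathrm{cat}_G(X)$ is the least number of open $G$-categorical sets covering $X$. $\mathbf{TC}_G(X)$ is the least $k$ such that $X\times X$ (diagonal action) is covered by $k$ $G$-invariant open sets $U_i$ each admitting a $G$-map $s\colon U_i\to X^I$ with $\pi s$ $G$-homotopic to the inclusion ($\infty$ if none); $X^I$ is the path space (compact-open topology, action $(g\gamma)(t)=g\gamma(t)$), $\pi(\gamma)=(\gamma(0),\gamma(1))$. *)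

theory Defs
  imports "HOL-Analysis.Analysis" "HOL-Algebra.Group" "HOL-Library.Extended_Nat"
begin

definition topological_group :: "('a, 'b) monoid_scheme \<Rightarrow> 'a topology \<Rightarrow> bool" where
  "topological_group G T \<longleftrightarrow> group G \<and> topspace T = carrier G \<and>
     continuous_map (prod_topology T T) T (\<lambda>(x, y). x \<otimes>\<^bsub>G\<^esub> y) \<and>
     continuous_map T T (\<lambda>x. inv\<^bsub>G\<^esub> x)"

definition continuous_action ::
  "('g, 'b) monoid_scheme \<Rightarrow> 'g topology \<Rightarrow> 'x topology \<Rightarrow> ('g \<Rightarrow> 'x \<Rightarrow> 'x) \<Rightarrow> bool" where
  "continuous_action G TG TX act \<longleftrightarrow>
     continuous_map (prod_topology TG TX) TX (\<lambda>(g, x). act g x) \<and>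
     (\<forall>x\<in>topspace TX. act \<one>\<^bsub>G\<^esub> x = x) \<and>
     (\<forall>g\<in>carrier G. \<forall>h\<in>carrier G. \<forall>x\<in>topspace TX. act (g \<otimes>\<^bsub>G\<^esub> h) x = act g (act h x))"

definition fixed_set :: "'x topology \<Rightarrow> ('g \<Rightarrow> 'x \<Rightarrow> 'x) \<Rightarrow> 'g set \<Rightarrow> 'x set" where
  "fixed_set TX act H = {x \<in> topspace TX. \<forall>h\<in>H. act h x = x}"

definition G_connected ::
  "('g, 'b) monoid_scheme \<Rightarrow> 'g topology \<Rightarrow> 'x topology \<Rightarrow> ('g \<Rightarrow> 'x \<Rightarrow> 'x) \<Rightarrow> bool" where
  "G_connected G TG TX act \<longleftrightarrow>
     (\<forall>H. subgroup H G \<and> closedin TG H \<longrightarrow> path_connectedin TX (fixed_set TX act H))"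

definition invariant_set :: "('g, 'b) monoid_scheme \<Rightarrow> ('g \<Rightarrow> 'x \<Rightarrow> 'x) \<Rightarrow> 'x set \<Rightarrow> bool" where
  "invariant_set G act U \<longleftrightarrow> (\<forall>g\<in>carrier G. \<forall>x\<in>U. act g x \<in> U)"

definition equivariant_on ::
  "('g, 'b) monoid_scheme \<Rightarrow> ('g \<Rightarrow> 'x \<Rightarrow> 'x) \<Rightarrow> ('g \<Rightarrow> 'y \<Rightarrow> 'y) \<Rightarrow> 'x set \<Rightarrow> ('x \<Rightarrow> 'y) \<Rightarrow> bool" where
  "equivariant_on G act act' U f \<longleftrightarrow> (\<forall>g\<in>carrier G. \<forall>x\<in>U. f (act g x) = act' g (f x))"

text \<open>G-homotopy of maps defined on the invariant subset U of TX into TY: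
  a homotopy each of whose stages is equivariant (trivial action on I).\<close>
definition G_homotopic ::
  "('g, 'b) monoid_scheme \<Rightarrow> ('g \<Rightarrow> 'x \<Rightarrow> 'x) \<Rightarrow> ('g \<Rightarrow> 'y \<Rightarrow> 'y) \<Rightarrow>
   'x topology \<Rightarrow> 'y topology \<Rightarrow> 'x set \<Rightarrow> ('x \<Rightarrow> 'y) \<Rightarrow> ('x \<Rightarrow> 'y) \<Rightarrow> bool" where
  "G_homotopic G act act' TX TY U f f' \<longleftrightarrow>
     homotopic_with (\<lambda>k. equivariant_on G act act' U k) (subtopology TX U) TY f f'"

definition orbit :: "('g, 'b) monoid_scheme \<Rightarrow> ('g \<Rightarrow> 'x \<Rightarrow> 'x) \<Rightarrow> 'x \<Rightarrow> 'x set" where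
  "orbit G act x = (\<lambda>g. act g x) ` carrier G"

definition G_categorical ::
  "('g, 'b) monoid_scheme \<Rightarrow> 'x topology \<Rightarrow> ('g \<Rightarrow> 'x \<Rightarrow> 'x) \<Rightarrow> 'x set \<Rightarrow> bool" where
  "G_categorical G TX act U \<longleftrightarrow> U \<subseteq> topspace TX \<and> invariant_set G act U \<and>
     (\<exists>f x0. x0 \<in> topspace TX \<and> G_homotopic G act act TX TX U id f \<and> f ` U \<subseteq> orbit G act x0)"

text \<open>Equivariant LS category (non-normalized; \<infinity> if no finite cover exists).\<close>
definition cat_G ::
  "('g, 'b) monoid_scheme \<Rightarrow> 'x topology \<Rightarrow> ('g \<Rightarrow> 'x \<Rightarrow> 'x) \<Rightarrow> enat" where
  "cat_G G TX act = Inf {enat k | k. \<exists>V :: nat \<Rightarrow> 'x set.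
      (\<forall>i<k. openin TX (V i) \<and> G_categorical G TX act (V i)) \<and>
      topspace TX \<subseteq> (\<Union>i<k. V i)}"

definition path_space :: "'x topology \<Rightarrow> (real \<Rightarrow> 'x) set" where
  "path_space TX = {\<gamma>. continuous_map (top_of_set {0..1}) TX \<gamma> \<and> (\<forall>t. t \<notin> {0..1} \<longrightarrow> \<gamma> t = undefined)}"

definition compact_open_path_topology :: "'x topology \<Rightarrow> (real \<Rightarrow> 'x) topology" where
  "compact_open_path_topology TX =
     subtopology
       (topology_generated_by {{\<gamma>. \<gamma> ` K \<subseteq> V} | K V. compact K \<and> K \<subseteq> {0..1} \<and> openin TX V})
       (path_space TX)"

definition diag_action :: "('g \<Rightarrow> 'x \<Rightarrow> 'x) \<Rightarrow> 'g \<Rightarrow> 'x \<times> 'x \<Rightarrow> 'x \<times> 'x" where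
  "diag_action act g = (\<lambda>(a, b). (act g a, act g b))"

text \<open>Equivariant topological complexity (\<infinity> if no finite cover exists).\<close>
definition TC_G ::
  "('g, 'b) monoid_scheme \<Rightarrow> 'x topology \<Rightarrow> ('g \<Rightarrow> 'x \<Rightarrow> 'x) \<Rightarrow> enat" where
  "TC_G G TX act = Inf {enat k | k. \<exists>(V :: nat \<Rightarrow> ('x \<times> 'x) set) (s :: nat \<Rightarrow> 'x \<times> 'x \<Rightarrow> real \<Rightarrow> 'x).
      (\<forall>i<k. openin (prod_topology TX TX) (V i) \<and>
             invariant_set G (diag_action act) (V i) \<and>
             continuous_map (subtopology (prod_topology TX TX) (V i)) (compact_open_path_topology TX) (s i) \<and>
             (\<forall>g\<in>carrier G. \<forall>u\<in>V i. \<forall>t\<in>{0..1}. s i (diag_action act g u) t = act g (s i u t)) \<and>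
             G_homotopic G (diag_action act) (diag_action act) (prod_topology TX TX) (prod_topology TX TX)
               (V i) (\<lambda>u. (s i u 0, s i u 1)) id) \<and>
      topspace (prod_topology TX TX) \<subseteq> (\<Union>i<k. V i)}"

end

theory Submission
  imports Defs
begin

lemma topspace_co: "topspace (compact_open_path_topology TX) = path_space TX"
proof -
  have "UNIV \<in> {{\<gamma>. \<gamma> ` K \<subseteq> V} | K V. compact K \<and> K \<subseteq> {0..1} \<and> openin TX V}"
    by (rule CollectI, rule exI[of _ "{}"], rule exI[of _ "{}"]) auto
  then have "\<Union>{{\<gamma>::real\<Rightarrow>'a. \<gamma> ` K \<subseteq> V} | K V. compact K \<and> K \<subseteq> {0..1} \<and> openin TX V} = UNIV"
    by blast
  then show ?thesis unfolding compact_open_path_topology_def by simp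
qed

lemma openin_co_sub:
  assumes "continuous_map Y (compact_open_path_topology TX) S"
    and "compact K" "K \<subseteq> {0..1}" "openin TX W"
  shows "openin Y {u \<in> topspace Y. S u ` K \<subseteq> W}"
proof -
  have "openin (compact_open_path_topology TX) ({\<gamma>. \<gamma> ` K \<subseteq> W} \<inter> path_space TX)"
    unfolding compact_open_path_topology_def openin_subtopology
    by (rule exI[of _ "{\<gamma>. \<gamma> ` K \<subseteq> W}"], rule conjI[OF topology_generated_by_Basis], use assms in auto)
  then have "openin Y {u \<in> topspace Y. S u \<in> {\<gamma>. \<gamma> ` K \<subseteq> W} \<inter> path_space TX}"
    using assms(1) openin_continuous_map_preimage by blast
  moreover have "\<And>u. u \<in> topspace Y \<Longrightarrow> S u \<in> path_space TX"
    using continuous_map_image_subset_topspace[OF assms(1)] topspace_co[of TX] by blast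
  then have "{u \<in> topspace Y. S u \<in> {\<gamma>. \<gamma> ` K \<subseteq> W} \<inter> path_space TX} = {u \<in> topspace Y. S u ` K \<subseteq> W}"
    by blast
  ultimately show ?thesis by simp
qed

lemma eval_cont:
  assumes S: "continuous_map Y (compact_open_path_topology TX) S"
  shows "continuous_map (prod_topology (top_of_set {0..1}) Y) TX (\<lambda>(t,u). S u t)"
proof -
  have pth: "continuous_map (top_of_set ({0..1}::real set)) TX (S u)" if u: "u \<in> topspace Y" for u
  proof -
    have "S u \<in> topspace (compact_open_path_topology TX)"
      using continuous_map_image_subset_topspace[OF S] u by blast
    then show ?thesis unfolding topspace_co path_space_def by blast
  qed
  show ?thesis
    unfolding continuous_map_def
  proof (intro conjI allI impI)
    show "(\<lambda>(t, u). S u t) \<in> topspace (prod_topology (top_of_set ({0..1}::real set)) Y) \<rightarrow> topspace TX"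
    proof
      fix p assume "p \<in> topspace (prod_topology (top_of_set ({0..1}::real set)) Y)"
      then obtain t u where tu: "p = (t,u)" "t \<in> {0..1}" "u \<in> topspace Y" by auto
      then have "S u t \<in> topspace TX"
        using continuous_map_image_subset_topspace[OF pth[of u]] by auto
      then show "(\<lambda>(t, u). S u t) p \<in> topspace TX" using tu by simp
    qed
  next
    fix W assume W: "openin TX W"
    show "openin (prod_topology (top_of_set ({0..1}::real set)) Y)
          {x \<in> topspace (prod_topology (top_of_set ({0..1}::real set)) Y). (\<lambda>(t, u). S u t) x \<in> W}"
    proof (subst openin_subopen, intro ballI)
      fix p assume p: "p \<in> {x \<in> topspace (prod_topology (top_of_set ({0..1}::real set)) Y). (\<lambda>(t, u). S u t) x \<in> W}"
      obtain t u where p_eq: "p = (t,u)" by fastforce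
      have t01: "t \<in> {0..1}" and uY: "u \<in> topspace Y" and tW: "S u t \<in> W" using p p_eq by auto
      have "openin (top_of_set ({0..1}::real set)) {x \<in> topspace (top_of_set ({0..1}::real set)). S u x \<in> W}"
        using pth[OF uY] W openin_continuous_map_preimage by blast
      then obtain Op where Op: "open Op" "{x \<in> {0..1}. S u x \<in> W} = {0..1} \<inter> Op"
        by (auto simp: openin_open)
      have "t \<in> Op" using Op t01 tW by blast
      then obtain d where d: "d > 0" "ball t d \<subseteq> Op" using Op(1) open_contains_ball by blast
      define N where "N = cball t (d/2) \<inter> {0..1::real}"
      have Nc: "compact N" unfolding N_def by (simp add: compact_Int_closed)
      have N01: "N \<subseteq> {0..1}" unfolding N_def by auto
      have NO: "N \<subseteq> Op" unfolding N_def using d by (auto simp: subset_eq dist_commute)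
      define Q where "Q = {u' \<in> topspace Y. S u' ` N \<subseteq> W}"
      have Qo: "openin Y Q" unfolding Q_def by (rule openin_co_sub[OF S Nc N01 W])
      have uQ: "u \<in> Q" unfolding Q_def using uY NO N01 Op by blast
      define T where "T = ({0..1} \<inter> ball t (d/2)) \<times> Q"
      have "openin (top_of_set ({0..1}::real set)) ({0..1} \<inter> ball t (d/2))"
        by (auto simp: openin_open)
      then have To: "openin (prod_topology (top_of_set ({0..1}::real set)) Y) T"
        unfolding T_def using Qo by (simp add: openin_prod_Times_iff)
      have pT: "p \<in> T" unfolding T_def using p_eq t01 uQ d by auto
      have "T \<subseteq> {x \<in> topspace (prod_topology (top_of_set ({0..1}::real set)) Y). (\<lambda>(t, u). S u t) x \<in> W}"
      proof
        fix q assume q: "q \<in> T"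
        then obtain t' u' where q_eq: "q = (t',u')" "t' \<in> {0..1}" "t' \<in> ball t (d/2)" "u' \<in> Q"
          unfolding T_def by auto
        have "t' \<in> N" unfolding N_def using q_eq by auto
        then show "q \<in> {x \<in> topspace (prod_topology (top_of_set ({0..1}::real set)) Y). (\<lambda>(t, u). S u t) x \<in> W}"
          using q_eq unfolding Q_def by auto
      qed
      then show "\<exists>T. openin (prod_topology (top_of_set ({0..1}::real set)) Y) T \<and> p \<in> T \<and>
           T \<subseteq> {x \<in> topspace (prod_topology (top_of_set ({0..1}::real set)) Y). (\<lambda>(t, u). S u t) x \<in> W}"
        using To pT by blast
    qed
  qed
qed

lemma const_path_cont:
  fixes f :: "'a \<Rightarrow> 'b" and TX :: "'b topology"
  assumes f: "continuous_map Y TX f"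
  shows "continuous_map Y (compact_open_path_topology TX) (\<lambda>u t. if t \<in> {0..1} then f u else undefined)"
proof -
  define F where "F = (\<lambda>u (t::real). if t \<in> {0..1} then f u else undefined)"
  define SS where "SS = {{\<gamma>::real\<Rightarrow>'b. \<gamma> ` K \<subseteq> V} | K V. compact K \<and> K \<subseteq> {0..1} \<and> openin TX V}"
  have key: "openin Y (F -` U \<inter> topspace Y)" if "U \<in> SS" for U
  proof -
    have ex: "\<exists>K V. U = {\<gamma>. \<gamma> ` K \<subseteq> V} \<and> compact K \<and> K \<subseteq> {0..1} \<and> openin TX V"
      using that unfolding SS_def by (simp only: mem_Collect_eq)
    obtain K V where U: "U = {\<gamma>. \<gamma> ` K \<subseteq> V}" "K \<subseteq> {0..1}" "openin TX V"
      using ex by auto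
    show ?thesis
    proof (cases "K = {}")
      case True
      then have "U = UNIV" using U by auto
      then show ?thesis by simp
    next
      case False
      have im: "\<And>u. F u ` K = {f u}"
        using U(2) False unfolding F_def by (auto simp del: atLeastAtMost_iff)
      have "F -` U \<inter> topspace Y = {u \<in> topspace Y. f u \<in> V}"
        using U(1) im by auto
      then show ?thesis using openin_continuous_map_preimage[OF f U(3)] by simp
    qed
  qed
  have "UNIV \<in> SS"
    unfolding SS_def by (rule CollectI, rule exI[of _ "{}"], rule exI[of _ "{}"]) auto
  then have c1: "continuous_map Y (topology_generated_by SS) F"
    unfolding continuous_on_generated_topo_iff using key by blast
  have c2: "F ` topspace Y \<subseteq> path_space TX"
  proof (clarsimp simp: path_space_def F_def)
    fix u assume u: "u \<in> topspace Y"
    then have "f u \<in> topspace TX" using f by (auto simp: continuous_map_def)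
    then show "continuous_map (top_of_set {0..1}) TX (\<lambda>t. if 0 \<le> t \<and> t \<le> 1 then f u else undefined)"
      by (intro continuous_map_eq[OF continuous_map_const[THEN iffD2]]) auto
  qed
  have e1: "(\<lambda>u t. if t \<in> {0..1} then f u else undefined) = F" by (simp add: F_def)
  have e2: "compact_open_path_topology TX = subtopology (topology_generated_by SS) (path_space TX)"
    by (simp add: compact_open_path_topology_def SS_def)
  show ?thesis
    unfolding e1 e2 continuous_map_in_subtopology using c1 c2 by blast
qed

lemma homotopic_withI_loc:
  fixes h :: "real \<times> 'a \<Rightarrow> 'b"
  assumes "\<And>h k. (\<And>x. x \<in> topspace X \<Longrightarrow> h x = k x) \<Longrightarrow> (P h \<longleftrightarrow> P k)"
    and "continuous_map (prod_topology (top_of_set {0..1}) X) Y h"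
    and "\<And>x. x \<in> topspace X \<Longrightarrow> h (0,x) = p x" "\<And>x. x \<in> topspace X \<Longrightarrow> h (1,x) = q x"
    and "\<And>t. t \<in> {0..1} \<Longrightarrow> P (\<lambda>x. h (t,x))"
  shows "homotopic_with P X Y p q"
  using homotopic_with[where P=P and X=X and Y=Y and p=p and q=q, OF assms(1)] assms(2-) by blast

lemma homotopic_withE_loc:
  assumes "\<And>h k. (\<And>x. x \<in> topspace X \<Longrightarrow> h x = k x) \<Longrightarrow> (P h \<longleftrightarrow> P k)"
    and "homotopic_with P X Y p q"
  obtains h :: "real \<times> 'a \<Rightarrow> 'b" where "continuous_map (prod_topology (top_of_set {0..1}) X) Y h"
    "\<And>x. x \<in> topspace X \<Longrightarrow> h (0,x) = p x" "\<And>x. x \<in> topspace X \<Longrightarrow> h (1,x) = q x"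
    "\<And>t. t \<in> {0..1} \<Longrightarrow> P (\<lambda>x. h (t,x))"
  using homotopic_with[where P=P and X=X and Y=Y and p=p and q=q, OF assms(1)] assms(2) by blast

lemma equiv_respects:
  assumes "invariant_set G a U" "U \<subseteq> topspace T"
    and "\<And>x. x \<in> topspace (subtopology T U) \<Longrightarrow> h x = k x"
  shows "equivariant_on G a b U h \<longleftrightarrow> equivariant_on G a b U k"
proof -
  have hk: "\<And>x. x \<in> U \<Longrightarrow> h x = k x" using assms(2,3) by auto
  show ?thesis using assms(1) unfolding equivariant_on_def invariant_set_def
    by (metis hk)
qed

lemma diag_simp [simp]: "diag_action act g (a,b) = (act g a, act g b)"
  by (simp add: diag_action_def)
lemma diag_fst [simp]: "fst (diag_action act g p) = act g (fst p)"
  by (cases p) simp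
lemma diag_snd [simp]: "snd (diag_action act g p) = act g (snd p)"
  by (cases p) simp

locale S =
  fixes G :: "'g monoid" and TG :: "'g topology"
    and X :: "'x monoid" and TX :: "'x topology"
    and act :: "'g \<Rightarrow> 'x \<Rightarrow> 'x"
  assumes tgG: "topological_group G TG" and cG: "compact_space TG" and hG: "Hausdorff_space TG"
    and tgX: "topological_group X TX" and hX: "Hausdorff_space TX"
    and ca: "continuous_action G TG TX act"
    and homa: "\<forall>g\<in>carrier G. act g \<in> hom X X"
    and Gc: "G_connected G TG TX act"
begin

lemma grpG: "group G" using tgG by (simp add: topological_group_def)
lemma grpX: "group X" using tgX by (simp add: topological_group_def)
lemma topG: "topspace TG = carrier G" using tgG by (simp add: topological_group_def)
lemma topX: "topspace TX = carrier X" using tgX by (simp add: topological_group_def)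
lemma cmul: "continuous_map (prod_topology TX TX) TX (\<lambda>(x, y). x \<otimes>\<^bsub>X\<^esub> y)"
  using tgX by (simp add: topological_group_def)
lemma cinv: "continuous_map TX TX (\<lambda>x. inv\<^bsub>X\<^esub> x)"
  using tgX by (simp add: topological_group_def)
lemma cact: "continuous_map (prod_topology TG TX) TX (\<lambda>(g, x). act g x)"
  using ca by (simp add: continuous_action_def)
lemma act_one_g: "x \<in> carrier X \<Longrightarrow> act \<one>\<^bsub>G\<^esub> x = x"
  using ca topX by (simp add: continuous_action_def)
lemma act_comp: "g \<in> carrier G \<Longrightarrow> h \<in> carrier G \<Longrightarrow> x \<in> carrier X \<Longrightarrow> act (g \<otimes>\<^bsub>G\<^esub> h) x = act g (act h x)"
  using ca topX by (simp add: continuous_action_def)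
lemma gh: "g \<in> carrier G \<Longrightarrow> group_hom X X (act g)"
  using homa grpX by (simp add: group_hom_def group_hom_axioms_def)
lemma act_closed: "g \<in> carrier G \<Longrightarrow> x \<in> carrier X \<Longrightarrow> act g x \<in> carrier X"
  using homa by (auto simp: hom_def)
lemma act_mult: "g \<in> carrier G \<Longrightarrow> x \<in> carrier X \<Longrightarrow> y \<in> carrier X \<Longrightarrow> act g (x \<otimes>\<^bsub>X\<^esub> y) = act g x \<otimes>\<^bsub>X\<^esub> act g y"
  using homa by (auto simp: hom_def)
lemma act_e: "g \<in> carrier G \<Longrightarrow> act g \<one>\<^bsub>X\<^esub> = \<one>\<^bsub>X\<^esub>"
  using gh group_hom.hom_one by fastforce
lemma act_inv: "g \<in> carrier G \<Longrightarrow> x \<in> carrier X \<Longrightarrow> act g (inv\<^bsub>X\<^esub> x) = inv\<^bsub>X\<^esub> (act g x)"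
  using gh group_hom.hom_inv by fastforce


lemma one_c: "\<one>\<^bsub>X\<^esub> \<in> carrier X" using grpX by (simp add: group.is_monoid monoid.one_closed)
lemma one_cG: "\<one>\<^bsub>G\<^esub> \<in> carrier G" using grpG by (simp add: group.is_monoid monoid.one_closed)

lemma catfromTC:
  assumes Uo: "openin (prod_topology TX TX) U" and Ui: "invariant_set G (diag_action act) U"
    and sc: "continuous_map (subtopology (prod_topology TX TX) U) (compact_open_path_topology TX) s"
    and se: "\<forall>g\<in>carrier G. \<forall>u\<in>U. \<forall>t\<in>{0..1}. s (diag_action act g u) t = act g (s u t)"
    and sh: "G_homotopic G (diag_action act) (diag_action act) (prod_topology TX TX) (prod_topology TX TX)
               U (\<lambda>u. (s u 0, s u 1)) id"
  shows "openin TX {x \<in> topspace TX. (\<one>\<^bsub>X\<^esub>, x) \<in> U} \<and> G_categorical G TX act {x \<in> topspace TX. (\<one>\<^bsub>X\<^esub>, x) \<in> U}"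
proof -
  define e where "e = \<one>\<^bsub>X\<^esub>"
  define V where "V = {x \<in> topspace TX. (e, x) \<in> U}"
  define \<iota> where "\<iota> = (\<lambda>x::'x. (e, x))"
  have eT: "e \<in> topspace TX" unfolding e_def topX using one_c .
  have ci: "continuous_map TX (prod_topology TX TX) \<iota>"
    unfolding \<iota>_def continuous_map_pairwise o_def using eT by simp
  have Vo: "openin TX V"
    unfolding V_def using openin_continuous_map_preimage[OF ci Uo] by (simp add: \<iota>_def)
  have VT: "V \<subseteq> topspace TX" unfolding V_def by blast
  have ci': "continuous_map (subtopology TX V) (subtopology (prod_topology TX TX) U) \<iota>"
    unfolding continuous_map_in_subtopology
    using continuous_map_from_subtopology[OF ci] by (auto simp: V_def \<iota>_def)
  have actV: "act g x \<in> carrier X" if "g \<in> carrier G" "x \<in> V" for g x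
    using that act_closed VT topX by blast
  have iota_eq: "\<iota> (act g x) = diag_action act g (\<iota> x)" if "g \<in> carrier G" for g x
    using act_e[OF that] by (simp add: \<iota>_def e_def)
  have Vi: "invariant_set G act V"
    unfolding invariant_set_def
  proof (intro ballI)
    fix g x assume g: "g \<in> carrier G" and x: "x \<in> V"
    have "diag_action act g (e, x) \<in> U" using Ui g x unfolding invariant_set_def V_def by blast
    then show "act g x \<in> V" unfolding V_def using act_e[OF g] actV[OF g x] topX by (simp add: e_def)
  qed
  define P where "P = equivariant_on G act act V"
  have Presp: "\<And>h k. (\<And>x. x \<in> topspace (subtopology TX V) \<Longrightarrow> h x = k x) \<Longrightarrow> P h \<longleftrightarrow> P k"
    unfolding P_def by (rule equiv_respects[OF Vi VT])
  have h1: "homotopic_with (equivariant_on G act (diag_action act) V) (subtopology TX V) (prod_topology TX TX)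
      ((\<lambda>u. (s u 0, s u 1)) \<circ> \<iota>) (id \<circ> \<iota>)"
  proof (rule homotopic_with_compose_continuous_map_right[OF sh[unfolded G_homotopic_def] ci'])
    fix j assume "equivariant_on G (diag_action act) (diag_action act) U j"
    then show "equivariant_on G act (diag_action act) V (j \<circ> \<iota>)"
      unfolding equivariant_on_def using iota_eq by (simp add: V_def \<iota>_def[symmetric])
  qed
  have hsnd: "homotopic_with P (subtopology TX V) TX (snd \<circ> ((\<lambda>u. (s u 0, s u 1)) \<circ> \<iota>)) (snd \<circ> (id \<circ> \<iota>))"
    by (rule homotopic_with_compose_continuous_map_left[OF h1 continuous_map_snd])
       (simp add: P_def equivariant_on_def)
  have hfst: "homotopic_with P (subtopology TX V) TX (fst \<circ> ((\<lambda>u. (s u 0, s u 1)) \<circ> \<iota>)) (fst \<circ> (id \<circ> \<iota>))"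
    by (rule homotopic_with_compose_continuous_map_left[OF h1 continuous_map_fst])
       (simp add: P_def equivariant_on_def)
  have hpath: "homotopic_with P (subtopology TX V) TX (\<lambda>x. s (e,x) 0) (\<lambda>x. s (e,x) 1)"
  proof -
    have c: "continuous_map (subtopology TX V) (compact_open_path_topology TX) (s \<circ> \<iota>)"
      using continuous_map_compose[OF ci' sc] .
    have hc: "continuous_map (prod_topology (top_of_set {0..1}) (subtopology TX V)) TX (\<lambda>(t,u). (s \<circ> \<iota>) u t)"
      by (rule eval_cont[OF c])
    have hP: "\<forall>t\<in>{0..1}. P (\<lambda>x. (\<lambda>(t,u). (s \<circ> \<iota>) u t) (t,x))"
    proof (intro ballI)
      fix t :: real assume t: "t \<in> {0..1}"
      show "P (\<lambda>x. (\<lambda>(t,u). (s \<circ> \<iota>) u t) (t,x))"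
        unfolding P_def equivariant_on_def
      proof (intro ballI)
        fix g x assume g: "g \<in> carrier G" and x: "x \<in> V"
        have "\<iota> x \<in> U" using x by (simp add: V_def \<iota>_def)
        then show "(\<lambda>(t,u). (s \<circ> \<iota>) u t) (t, act g x) = act g ((\<lambda>(t,u). (s \<circ> \<iota>) u t) (t, x))"
          using se g t iota_eq[OF g] by simp
      qed
    qed
    show ?thesis
      by (rule homotopic_withI_loc[OF Presp hc]) (use hP in \<open>simp_all add: \<iota>_def\<close>)
  qed
  have e1: "snd \<circ> ((\<lambda>u. (s u 0, s u 1)) \<circ> \<iota>) = (\<lambda>x. s (e,x) 1)" by (simp add: \<iota>_def o_def)
  have e2: "snd \<circ> (id \<circ> \<iota>) = id" by (simp add: \<iota>_def o_def id_def)
  have e3: "fst \<circ> ((\<lambda>u. (s u 0, s u 1)) \<circ> \<iota>) = (\<lambda>x. s (e,x) 0)" by (simp add: \<iota>_def o_def)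
  have e4: "fst \<circ> (id \<circ> \<iota>) = (\<lambda>x. e)" by (simp add: \<iota>_def o_def)
  have a1: "homotopic_with P (subtopology TX V) TX id (\<lambda>x. s (e,x) 1)"
    using homotopic_with_symD[OF hsnd[unfolded e1 e2]] .
  have a2: "homotopic_with P (subtopology TX V) TX (\<lambda>x. s (e,x) 1) (\<lambda>x. s (e,x) 0)"
    using homotopic_with_symD[OF hpath] .
  have "homotopic_with P (subtopology TX V) TX id (\<lambda>x. e)"
    using homotopic_with_trans[OF homotopic_with_trans[OF a1 a2] hfst[unfolded e3 e4]] .
  moreover have "(\<lambda>x. e) ` V \<subseteq> orbit G act e"
    unfolding orbit_def using act_one_g one_c one_cG by (force simp: e_def)
  ultimately have "G_categorical G TX act V"
    unfolding G_categorical_def G_homotopic_def P_def using VT Vi eT by blast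
  then show ?thesis using Vo by (simp add: V_def e_def)
qed


lemma cat_contract:
  assumes VC: "G_categorical G TX act V"
  shows "homotopic_with (equivariant_on G act act V) (subtopology TX V) TX id (\<lambda>x. \<one>\<^bsub>X\<^esub>)"
proof -
  interpret Gg: group G by (rule grpG)
  obtain f x0 where VT: "V \<subseteq> topspace TX" and Vi: "invariant_set G act V" and x0: "x0 \<in> topspace TX"
    and hf: "homotopic_with (equivariant_on G act act V) (subtopology TX V) TX id f"
    and fV: "f ` V \<subseteq> orbit G act x0"
    using VC unfolding G_categorical_def G_homotopic_def by blast
  define P where "P = equivariant_on G act act V"
  have Presp: "\<And>h k. (\<And>x. x \<in> topspace (subtopology TX V) \<Longrightarrow> h x = k x) \<Longrightarrow> P h \<longleftrightarrow> P k"
    unfolding P_def by (rule equiv_respects[OF Vi VT])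
  have tV: "topspace (subtopology TX V) = V" using VT by auto
  have fc: "continuous_map (subtopology TX V) TX f" using homotopic_with_imp_continuous_maps[OF hf] by blast
  have feq: "equivariant_on G act act V f" using homotopic_with_imp_property[OF hf] by blast
  have x0c: "x0 \<in> carrier X" using x0 topX by simp
  define Hs where "Hs = {g \<in> carrier G. act g x0 = x0}"
  have sg: "subgroup Hs G"
  proof (rule subgroup.intro)
    show "Hs \<subseteq> carrier G" unfolding Hs_def by blast
  next
    fix a b assume "a \<in> Hs" "b \<in> Hs"
    then show "a \<otimes>\<^bsub>G\<^esub> b \<in> Hs" unfolding Hs_def using act_comp x0c by auto
  next
    show "\<one>\<^bsub>G\<^esub> \<in> Hs" unfolding Hs_def using act_one_g x0c by simp
  next
    fix a assume a: "a \<in> Hs"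
    then have ag: "a \<in> carrier G" and ax: "act a x0 = x0" by (auto simp: Hs_def)
    have ic: "inv\<^bsub>G\<^esub> a \<in> carrier G" using ag by simp
    have "act (inv\<^bsub>G\<^esub> a) x0 = act (inv\<^bsub>G\<^esub> a) (act a x0)" using ax by simp
    also have "\<dots> = act (inv\<^bsub>G\<^esub> a \<otimes>\<^bsub>G\<^esub> a) x0" by (rule act_comp[OF ic ag x0c, symmetric])
    also have "\<dots> = x0" using ag act_one_g x0c by simp
    finally show "inv\<^bsub>G\<^esub> a \<in> Hs" using ic by (simp add: Hs_def)
  qed
  have cm: "continuous_map TG TX (\<lambda>g. act g x0)"
  proof -
    have pm: "continuous_map TG (prod_topology TG TX) (\<lambda>g. (g, x0))"
      unfolding continuous_map_pairwise o_def using x0 by simp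
    show ?thesis using continuous_map_compose[OF pm cact] by (simp add: o_def)
  qed
  have "Hs = {g \<in> topspace TG. act g x0 \<in> {x0}}" by (auto simp: Hs_def topG)
  then have cl: "closedin TG Hs"
    using closedin_continuous_map_preimage[OF cm closedin_Hausdorff_singleton[OF hX x0]] by simp
  have pc: "path_connectedin TX (fixed_set TX act Hs)" using Gc sg cl unfolding G_connected_def by blast
  have x0F: "x0 \<in> fixed_set TX act Hs" unfolding fixed_set_def Hs_def using x0 by auto
  have eF: "\<one>\<^bsub>X\<^esub> \<in> fixed_set TX act Hs" unfolding fixed_set_def Hs_def using one_c topX act_e by auto
  obtain \<gamma> where \<gamma>: "pathin (subtopology TX (fixed_set TX act Hs)) \<gamma>" "\<gamma> 0 = x0" "\<gamma> 1 = \<one>\<^bsub>X\<^esub>"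
  proof -
    have "x0 \<in> topspace TX \<inter> fixed_set TX act Hs" "\<one>\<^bsub>X\<^esub> \<in> topspace TX \<inter> fixed_set TX act Hs"
      using x0F eF unfolding fixed_set_def by auto
    then have "\<exists>g. pathin (subtopology TX (fixed_set TX act Hs)) g \<and> g 0 = x0 \<and> g 1 = \<one>\<^bsub>X\<^esub>"
      using pc unfolding path_connectedin_def path_connected_space_def by simp
    then show ?thesis using that by blast
  qed
  have \<gamma>p: "pathin TX \<gamma>" and \<gamma>F: "\<And>t. t \<in> {0..1} \<Longrightarrow> \<gamma> t \<in> fixed_set TX act Hs"
    using \<gamma>(1) pathin_subtopology by blast+
  have \<gamma>c: "\<And>t. t \<in> {0..1} \<Longrightarrow> \<gamma> t \<in> carrier X" using \<gamma>F topX unfolding fixed_set_def by blast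
  have key: "act g (\<gamma> t) = act g' (\<gamma> t)"
    if g: "g \<in> carrier G" and g': "g' \<in> carrier G" and eq: "act g x0 = act g' x0" and t: "t \<in> {0..1}" for g g' t
  proof -
    define h where "h = inv\<^bsub>G\<^esub> g \<otimes>\<^bsub>G\<^esub> g'"
    have ig: "inv\<^bsub>G\<^esub> g \<in> carrier G" using g by simp
    have hc: "h \<in> carrier G" unfolding h_def using ig g' by simp
    have "act h x0 = act (inv\<^bsub>G\<^esub> g) (act g' x0)" unfolding h_def using act_comp ig g' x0c by simp
    also have "\<dots> = act (inv\<^bsub>G\<^esub> g) (act g x0)" using eq by simp
    also have "\<dots> = act (inv\<^bsub>G\<^esub> g \<otimes>\<^bsub>G\<^esub> g) x0" by (rule act_comp[OF ig g x0c, symmetric])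
    also have "\<dots> = x0" using g act_one_g x0c by simp
    finally have "h \<in> Hs" using hc by (simp add: Hs_def)
    then have fx: "act h (\<gamma> t) = \<gamma> t" using \<gamma>F[OF t] unfolding fixed_set_def by blast
    have gh: "g \<otimes>\<^bsub>G\<^esub> h = g'" unfolding h_def using g g' ig by (simp add: Gg.m_assoc[symmetric])
    have "act g' (\<gamma> t) = act (g \<otimes>\<^bsub>G\<^esub> h) (\<gamma> t)" using gh by simp
    also have "\<dots> = act g (act h (\<gamma> t))" using act_comp g hc \<gamma>c[OF t] by simp
    finally show ?thesis using fx by simp
  qed
  define \<Phi> where "\<Phi> = (\<lambda>z::real \<times> 'x. act (SOME g. g \<in> carrier G \<and> act g x0 = snd z) (\<gamma> (fst z)))"
  have \<Phi>eq: "\<Phi> (t, act g x0) = act g (\<gamma> t)" if g: "g \<in> carrier G" and t: "t \<in> {0..1}" for g t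
  proof -
    have "\<exists>g'. g' \<in> carrier G \<and> act g' x0 = act g x0" using g by blast
    then have "(SOME g'. g' \<in> carrier G \<and> act g' x0 = act g x0) \<in> carrier G \<and>
        act (SOME g'. g' \<in> carrier G \<and> act g' x0 = act g x0) x0 = act g x0" by (rule someI_ex)
    then show ?thesis unfolding \<Phi>_def using key[OF _ g _ t] by auto
  qed
  define q where "q = (\<lambda>z::real \<times> 'g. (fst z, act (snd z) x0))"
  define A where "A = prod_topology (top_of_set ({0..1}::real set)) TG"
  define B where "B = subtopology (prod_topology (top_of_set ({0..1}::real set)) TX) (q ` ({0..1} \<times> carrier G))"
  have tA: "topspace A = {0..1} \<times> carrier G" unfolding A_def by (simp add: topG)
  have qc0: "continuous_map A (prod_topology (top_of_set {0..1}) TX) q"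
    unfolding A_def continuous_map_pairwise
  proof
    show "continuous_map (prod_topology (top_of_set {0..1}) TG) (top_of_set {0..1}) (fst \<circ> q)"
      unfolding q_def o_def by (simp add: continuous_map_fst)
    have "continuous_map (prod_topology (top_of_set ({0..1}::real set)) TG) TX ((\<lambda>g. act g x0) \<circ> snd)"
      by (rule continuous_map_compose[OF continuous_map_snd cm])
    then show "continuous_map (prod_topology (top_of_set {0..1}) TG) TX (snd \<circ> q)"
      unfolding q_def by (simp add: o_def)
  qed
  have qc: "continuous_map A B q" unfolding B_def continuous_map_in_subtopology
    using qc0 tA by simp
  have cA: "compact_space A" unfolding A_def compact_space_prod_topology
    using cG compact_space_subtopology[of euclideanreal "{0..1::real}"] by simp
  have hB: "Hausdorff_space B" unfolding B_def
    by (rule Hausdorff_space_subtopology) (simp add: Hausdorff_space_prod_topology hX Hausdorff_space_subtopology)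
  have qcl: "closed_map A B q" by (rule continuous_imp_closed_map[OF qc cA hB])
  have qim: "q ` ({0..1} \<times> carrier G) \<subseteq> {0..1} \<times> carrier X"
    unfolding q_def using act_closed x0c by auto
  have qs: "q ` topspace A = topspace B" unfolding B_def tA using qim topX by auto
  have qm: "quotient_map A B q" by (rule continuous_closed_imp_quotient_map[OF qc qcl qs])
  have Psi: "continuous_map A TX (\<lambda>z. act (snd z) (\<gamma> (fst z)))"
  proof -
    have pm: "continuous_map A (prod_topology TG TX) (\<lambda>z. (snd z, \<gamma> (fst z)))"
      unfolding A_def continuous_map_pairwise o_def
      using continuous_map_compose[OF continuous_map_fst \<gamma>p[unfolded pathin_def]]
      by (simp add: o_def continuous_map_snd)
    show ?thesis using continuous_map_compose[OF pm cact] by (simp add: o_def)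
  qed
  have "continuous_map A TX (\<Phi> \<circ> q)"
    by (rule continuous_map_eq[OF Psi]) (use \<Phi>eq tA in \<open>auto simp: q_def\<close>)
  then have \<Phi>c: "continuous_map B TX \<Phi>" by (rule continuous_compose_quotient_map[OF qm])
  have forb: "\<exists>g\<in>carrier G. f x = act g x0" if "x \<in> V" for x
    using fV that unfolding orbit_def by blast
  define m where "m = (\<lambda>z::real \<times> 'x. (fst z, f (snd z)))"
  have mc: "continuous_map (prod_topology (top_of_set {0..1}) (subtopology TX V)) B m"
    unfolding B_def continuous_map_in_subtopology
  proof
    show "continuous_map (prod_topology (top_of_set {0..1}) (subtopology TX V)) (prod_topology (top_of_set {0..1}) TX) m"
      unfolding continuous_map_pairwise m_def o_def
      using continuous_map_compose[OF continuous_map_snd fc] by (simp add: o_def continuous_map_fst)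
    show "m \<in> topspace (prod_topology (top_of_set {0..1}) (subtopology TX V)) \<rightarrow> q ` ({0..1} \<times> carrier G)"
    proof
      fix w assume "w \<in> topspace (prod_topology (top_of_set ({0..1}::real set)) (subtopology TX V))"
      then obtain t x where tx: "t \<in> {0..1}" "x \<in> V" "w = (t, x)" unfolding tV by auto
      obtain g where "g \<in> carrier G" "f x = act g x0" using forb[OF tx(2)] by blast
      then show "m w \<in> q ` ({0..1} \<times> carrier G)" unfolding q_def m_def using tx
        by (intro image_eqI[of _ _ "(t,g)"]) auto
    qed
  qed
  define L where "L = \<Phi> \<circ> m"
  have Lc: "continuous_map (prod_topology (top_of_set {0..1}) (subtopology TX V)) TX L"
    unfolding L_def by (rule continuous_map_compose[OF mc \<Phi>c])
  have h2: "homotopic_with P (subtopology TX V) TX f (\<lambda>x. \<one>\<^bsub>X\<^esub>)"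
  proof (rule homotopic_withI_loc[OF Presp Lc])
    fix x assume "x \<in> topspace (subtopology TX V)"
    then have xV: "x \<in> V" using tV by simp
    obtain g where g: "g \<in> carrier G" "f x = act g x0" using forb[OF xV] by blast
    show "L (0, x) = f x" unfolding L_def m_def using g \<Phi>eq[OF g(1), of 0] \<gamma>(2) by simp
  next
    fix x assume "x \<in> topspace (subtopology TX V)"
    then have xV: "x \<in> V" using tV by simp
    obtain g where g: "g \<in> carrier G" "f x = act g x0" using forb[OF xV] by blast
    show "L (1, x) = \<one>\<^bsub>X\<^esub>" unfolding L_def m_def using g \<Phi>eq[OF g(1), of 1] \<gamma>(3) act_e by simp
  next
    fix t :: real assume t: "t \<in> {0..1}"
    show "P (\<lambda>x. L (t, x))" unfolding P_def equivariant_on_def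
    proof (intro ballI)
      fix g' x assume g': "g' \<in> carrier G" and x: "x \<in> V"
      obtain g where g: "g \<in> carrier G" "f x = act g x0" using forb[OF x] by blast
      have "f (act g' x) = act g' (f x)" using feq g' x unfolding equivariant_on_def by blast
      also have "\<dots> = act (g' \<otimes>\<^bsub>G\<^esub> g) x0" using g g' act_comp x0c by simp
      finally have fe: "f (act g' x) = act (g' \<otimes>\<^bsub>G\<^esub> g) x0" .
      have "L (t, act g' x) = act (g' \<otimes>\<^bsub>G\<^esub> g) (\<gamma> t)"
        unfolding L_def m_def using fe \<Phi>eq[of "g' \<otimes>\<^bsub>G\<^esub> g" t] g g' t by simp
      also have "\<dots> = act g' (act g (\<gamma> t))" using act_comp g g' \<gamma>c[OF t] by simp
      also have "\<dots> = act g' (L (t, x))" unfolding L_def m_def using g \<Phi>eq[OF g(1) t] by simp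
      finally show "L (t, act g' x) = act g' (L (t, x))" .
    qed
  qed
  show ?thesis using homotopic_with_trans[OF hf h2[unfolded P_def]] .
qed


lemma TCfromcat:
  assumes VC: "G_categorical G TX act V" and Vo: "openin TX V"
  defines "U \<equiv> {p \<in> topspace (prod_topology TX TX). inv\<^bsub>X\<^esub> (fst p) \<otimes>\<^bsub>X\<^esub> snd p \<in> V}"
    and "s0 \<equiv> (\<lambda>(u::'x \<times> 'x) (t::real). if t \<in> {0..1} then fst u else undefined)"
  shows "openin (prod_topology TX TX) U \<and>
         invariant_set G (diag_action act) U \<and>
         continuous_map (subtopology (prod_topology TX TX) U) (compact_open_path_topology TX) s0 \<and>
         (\<forall>g\<in>carrier G. \<forall>u\<in>U. \<forall>t\<in>{0..1}. s0 (diag_action act g u) t = act g (s0 u t)) \<and>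
         G_homotopic G (diag_action act) (diag_action act) (prod_topology TX TX) (prod_topology TX TX)
               U (\<lambda>u. (s0 u 0, s0 u 1)) id"
proof -
  interpret Xg: group X by (rule grpX)
  have VT: "V \<subseteq> topspace TX" and Vi: "invariant_set G act V"
    using VC unfolding G_categorical_def by auto
  define d where "d = (\<lambda>p::'x \<times> 'x. inv\<^bsub>X\<^esub> (fst p) \<otimes>\<^bsub>X\<^esub> snd p)"
  have dc: "continuous_map (prod_topology TX TX) TX d"
  proof -
    have pm: "continuous_map (prod_topology TX TX) (prod_topology TX TX) (\<lambda>p. (inv\<^bsub>X\<^esub> (fst p), snd p))"
      unfolding continuous_map_pairwise o_def
      using continuous_map_compose[OF continuous_map_fst cinv]
      by (simp add: o_def continuous_map_snd)
    show ?thesis using continuous_map_compose[OF pm cmul] by (simp add: o_def d_def)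
  qed
  have Ueq: "U = {p \<in> topspace (prod_topology TX TX). d p \<in> V}" unfolding U_def d_def by simp
  have Uo: "openin (prod_topology TX TX) U"
    unfolding Ueq by (rule openin_continuous_map_preimage[OF dc Vo])
  have UT: "U \<subseteq> topspace (prod_topology TX TX)" unfolding Ueq by blast
  have dact: "d (diag_action act g p) = act g (d p)" if g: "g \<in> carrier G" and p: "p \<in> topspace (prod_topology TX TX)" for g p
  proof -
    have "fst p \<in> carrier X" "snd p \<in> carrier X" using p topX by (auto simp: mem_Times_iff)
    then show ?thesis unfolding d_def using act_mult[OF g] act_inv[OF g] g by simp
  qed
  have diagT: "diag_action act g p \<in> topspace (prod_topology TX TX)" if g: "g \<in> carrier G" and p: "p \<in> topspace (prod_topology TX TX)" for g p
    using p act_closed[OF g] topX by (cases p) auto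
  have Ui: "invariant_set G (diag_action act) U"
    unfolding invariant_set_def
  proof (intro ballI)
    fix g p assume g: "g \<in> carrier G" and p: "p \<in> U"
    then have pT: "p \<in> topspace (prod_topology TX TX)" and dp: "d p \<in> V" unfolding Ueq by auto
    have "act g (d p) \<in> V" using Vi g dp unfolding invariant_set_def by blast
    then show "diag_action act g p \<in> U" unfolding Ueq using dact[OF g pT] diagT[OF g pT] by simp
  qed
  have sc: "continuous_map (subtopology (prod_topology TX TX) U) (compact_open_path_topology TX) s0"
    unfolding s0_def using const_path_cont[OF continuous_map_from_subtopology[OF continuous_map_fst]]
    by (simp add: case_prod_unfold)
  have se: "\<forall>g\<in>carrier G. \<forall>u\<in>U. \<forall>t\<in>{0..1}. s0 (diag_action act g u) t = act g (s0 u t)"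
    unfolding s0_def by simp
  define PV where "PV = equivariant_on G act act V"
  have PVresp: "\<And>h k. (\<And>x. x \<in> topspace (subtopology TX V) \<Longrightarrow> h x = k x) \<Longrightarrow> PV h \<longleftrightarrow> PV k"
    unfolding PV_def by (rule equiv_respects[OF Vi VT])
  have tV: "topspace (subtopology TX V) = V" using VT by auto
  obtain C :: "real \<times> 'x \<Rightarrow> 'x" where Cc: "continuous_map (prod_topology (top_of_set {0..1}) (subtopology TX V)) TX C"
    and C0: "\<And>x. x \<in> topspace (subtopology TX V) \<Longrightarrow> C (0,x) = id x"
    and C1: "\<And>x. x \<in> topspace (subtopology TX V) \<Longrightarrow> C (1,x) = \<one>\<^bsub>X\<^esub>"
    and CP: "\<And>t. t \<in> {0..1} \<Longrightarrow> PV (\<lambda>x. C (t,x))"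
    using homotopic_withE_loc[OF PVresp cat_contract[OF VC, folded PV_def]] by metis
  have Cin: "C (t, v) \<in> carrier X" if "t \<in> {0..1}" "v \<in> V" for t v
    using continuous_map_image_subset_topspace[OF Cc] that tV topX by auto
  define PU where "PU = equivariant_on G (diag_action act) (diag_action act) U"
  have PUresp: "\<And>h k. (\<And>x. x \<in> topspace (subtopology (prod_topology TX TX) U) \<Longrightarrow> h x = k x) \<Longrightarrow> PU h \<longleftrightarrow> PU k"
    unfolding PU_def by (rule equiv_respects[OF Ui UT])
  have tU: "topspace (subtopology (prod_topology TX TX) U) = U" using UT by auto
  define K where "K = (\<lambda>z::real \<times> ('x \<times> 'x). (fst (snd z), fst (snd z) \<otimes>\<^bsub>X\<^esub> C (fst z, d (snd z))))"
  define Z where "Z = prod_topology (top_of_set ({0..1}::real set)) (subtopology (prod_topology TX TX) U)"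
  have s2: "continuous_map Z TX (\<lambda>z. fst (snd z))"
    unfolding Z_def
    using continuous_map_compose[OF continuous_map_snd continuous_map_from_subtopology[OF continuous_map_fst]]
    by (simp add: o_def)
  have dU: "continuous_map (subtopology (prod_topology TX TX) U) (subtopology TX V) d"
    unfolding continuous_map_in_subtopology
    using continuous_map_from_subtopology[OF dc] tU Ueq by auto
  have s4: "continuous_map Z (prod_topology (top_of_set {0..1}) (subtopology TX V)) (\<lambda>z. (fst z, d (snd z)))"
    unfolding Z_def continuous_map_pairwise o_def
    using continuous_map_compose[OF continuous_map_snd dU]
    by (simp add: o_def continuous_map_fst)
  have s5: "continuous_map Z TX (\<lambda>z. C (fst z, d (snd z)))"
    using continuous_map_compose[OF s4 Cc] by (simp add: o_def)
  have s6: "continuous_map Z (prod_topology TX TX) (\<lambda>z. (fst (snd z), C (fst z, d (snd z))))"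
    unfolding continuous_map_pairwise o_def using s2 s5 by simp
  have s7: "continuous_map Z TX (\<lambda>z. fst (snd z) \<otimes>\<^bsub>X\<^esub> C (fst z, d (snd z)))"
    using continuous_map_compose[OF s6 cmul] by (simp add: o_def)
  have Kc: "continuous_map Z (prod_topology TX TX) K"
    unfolding continuous_map_pairwise K_def o_def using s2 s7 by simp
  have hK: "homotopic_with PU (subtopology (prod_topology TX TX) U) (prod_topology TX TX) id (\<lambda>u. (s0 u 0, s0 u 1))"
  proof (rule homotopic_withI_loc[OF PUresp Kc[unfolded Z_def]])
    fix p assume "p \<in> topspace (subtopology (prod_topology TX TX) U)"
    then have pU: "p \<in> U" using tU by simp
    then have pT: "p \<in> topspace (prod_topology TX TX)" and dp: "d p \<in> V" unfolding Ueq by auto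
    have xc: "fst p \<in> carrier X" "snd p \<in> carrier X" using pT topX by (auto simp: mem_Times_iff)
    have "C (0, d p) = d p" using C0[of "d p"] dp VT by auto
    then have "fst p \<otimes>\<^bsub>X\<^esub> C (0, d p) = snd p"
      using xc unfolding d_def by (simp add: Xg.m_assoc[symmetric])
    then show "K (0, p) = id p" unfolding K_def by simp
  next
    fix p assume "p \<in> topspace (subtopology (prod_topology TX TX) U)"
    then have pU: "p \<in> U" using tU by simp
    then have pT: "p \<in> topspace (prod_topology TX TX)" and dp: "d p \<in> V" unfolding Ueq by auto
    have xc: "fst p \<in> carrier X" using pT topX by (auto simp: mem_Times_iff)
    have "C (1, d p) = \<one>\<^bsub>X\<^esub>" using C1[of "d p"] dp VT by auto
    then show "K (1, p) = (s0 p 0, s0 p 1)" unfolding K_def s0_def using xc by simp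
  next
    fix t :: real assume t: "t \<in> {0..1}"
    show "PU (\<lambda>p. K (t, p))" unfolding PU_def equivariant_on_def
    proof (intro ballI)
      fix g p assume g: "g \<in> carrier G" and pU: "p \<in> U"
      then have pT: "p \<in> topspace (prod_topology TX TX)" and dp: "d p \<in> V" unfolding Ueq by auto
      have xc: "fst p \<in> carrier X" using pT topX by (auto simp: mem_Times_iff)
      have Ct: "C (t, act g (d p)) = act g (C (t, d p))"
        using CP[OF t] g dp unfolding PV_def equivariant_on_def by blast
      have "K (t, diag_action act g p) = (act g (fst p), act g (fst p) \<otimes>\<^bsub>X\<^esub> act g (C (t, d p)))"
        unfolding K_def using dact[OF g pT] Ct by simp
      also have "\<dots> = diag_action act g (K (t, p))"
        unfolding K_def using act_mult[OF g xc Cin[OF t dp]] by simp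
      finally show "K (t, diag_action act g p) = diag_action act g (K (t, p))" .
    qed
  qed
  have "G_homotopic G (diag_action act) (diag_action act) (prod_topology TX TX) (prod_topology TX TX)
               U (\<lambda>u. (s0 u 0, s0 u 1)) id"
    unfolding G_homotopic_def using homotopic_with_symD[OF hK[unfolded PU_def]] .
  then show ?thesis by (intro conjI Uo Ui sc se)
qed

lemma main: "TC_G G TX act = cat_G G TX act"
proof -
  define e where "e = \<one>\<^bsub>X\<^esub>"
  have eT: "e \<in> topspace TX" unfolding e_def topX by (rule one_c)
  define tg where "tg = (\<lambda>(U::('x \<times> 'x) set) (s::'x \<times> 'x \<Rightarrow> real \<Rightarrow> 'x).
      openin (prod_topology TX TX) U \<and>
             invariant_set G (diag_action act) U \<and>
             continuous_map (subtopology (prod_topology TX TX) U) (compact_open_path_topology TX) s \<and>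
             (\<forall>g\<in>carrier G. \<forall>u\<in>U. \<forall>t\<in>{0..1}. s (diag_action act g u) t = act g (s u t)) \<and>
             G_homotopic G (diag_action act) (diag_action act) (prod_topology TX TX) (prod_topology TX TX)
               U (\<lambda>u. (s u 0, s u 1)) id)"
  define cg where "cg = (\<lambda>W. openin TX W \<and> G_categorical G TX act W)"
  have TCeq: "TC_G G TX act = Inf {enat k | k. \<exists>(V :: nat \<Rightarrow> ('x \<times> 'x) set) (s :: nat \<Rightarrow> 'x \<times> 'x \<Rightarrow> real \<Rightarrow> 'x).
      (\<forall>i<k. tg (V i) (s i)) \<and> topspace (prod_topology TX TX) \<subseteq> (\<Union>i<k. V i)}"
    unfolding TC_G_def tg_def by simp
  have Ceq: "cat_G G TX act = Inf {enat k | k. \<exists>V :: nat \<Rightarrow> 'x set.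
      (\<forall>i<k. cg (V i)) \<and> topspace TX \<subseteq> (\<Union>i<k. V i)}"
    unfolding cat_G_def cg_def by simp
  have g1: "cg {x \<in> topspace TX. (e, x) \<in> U}" if "tg U s" for U s
    using catfromTC[of U s] that unfolding tg_def cg_def e_def by simp
  have g2: "tg {p \<in> topspace (prod_topology TX TX). inv\<^bsub>X\<^esub> (fst p) \<otimes>\<^bsub>X\<^esub> snd p \<in> W}
      (\<lambda>u t. if t \<in> {0..1} then fst u else undefined)" if "cg W" for W
    using TCfromcat[of W] that unfolding tg_def cg_def by simp
  have A: "\<exists>V :: nat \<Rightarrow> 'x set. (\<forall>i<k. cg (V i)) \<and> topspace TX \<subseteq> (\<Union>i<k. V i)"
    if H: "\<forall>i<k. tg (V i) (s i)" and cov: "topspace (prod_topology TX TX) \<subseteq> (\<Union>i<k. V i)" for k V s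
  proof (intro exI conjI)
    show "\<forall>i<k. cg ((\<lambda>i. {x \<in> topspace TX. (e, x) \<in> V i}) i)" using H g1 by blast
    show "topspace TX \<subseteq> (\<Union>i<k. (\<lambda>i. {x \<in> topspace TX. (e, x) \<in> V i}) i)"
    proof
      fix x assume x: "x \<in> topspace TX"
      then have "(e, x) \<in> topspace (prod_topology TX TX)" using eT by simp
      then obtain i where "i < k" "(e, x) \<in> V i" using cov by blast
      then show "x \<in> (\<Union>i<k. (\<lambda>i. {x \<in> topspace TX. (e, x) \<in> V i}) i)" using x by blast
    qed
  qed
  have B: "\<exists>(V :: nat \<Rightarrow> ('x \<times> 'x) set) (s :: nat \<Rightarrow> 'x \<times> 'x \<Rightarrow> real \<Rightarrow> 'x).
      (\<forall>i<k. tg (V i) (s i)) \<and> topspace (prod_topology TX TX) \<subseteq> (\<Union>i<k. V i)"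
    if H: "\<forall>i<k. cg (V i)" and cov: "topspace TX \<subseteq> (\<Union>i<k. V i)" for k V
  proof (intro exI conjI)
    show "\<forall>i<k. tg ((\<lambda>i. {p \<in> topspace (prod_topology TX TX). inv\<^bsub>X\<^esub> (fst p) \<otimes>\<^bsub>X\<^esub> snd p \<in> V i}) i)
        ((\<lambda>i u t. if t \<in> {0..1} then fst u else undefined) i)"
      using H g2 by simp
    show "topspace (prod_topology TX TX) \<subseteq> (\<Union>i<k. (\<lambda>i. {p \<in> topspace (prod_topology TX TX). inv\<^bsub>X\<^esub> (fst p) \<otimes>\<^bsub>X\<^esub> snd p \<in> V i}) i)"
    proof
      fix p assume p: "p \<in> topspace (prod_topology TX TX)"
      then have "inv\<^bsub>X\<^esub> (fst p) \<otimes>\<^bsub>X\<^esub> snd p \<in> topspace TX"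
        using grpX topX by (auto simp: mem_Times_iff group.inv_closed group.is_monoid monoid.m_closed)
      then obtain i where "i < k" "inv\<^bsub>X\<^esub> (fst p) \<otimes>\<^bsub>X\<^esub> snd p \<in> V i" using cov by blast
      then show "p \<in> (\<Union>i<k. (\<lambda>i. {p \<in> topspace (prod_topology TX TX). inv\<^bsub>X\<^esub> (fst p) \<otimes>\<^bsub>X\<^esub> snd p \<in> V i}) i)"
        using p by blast
    qed
  qed
  have eq: "(\<exists>(V :: nat \<Rightarrow> ('x \<times> 'x) set) (s :: nat \<Rightarrow> 'x \<times> 'x \<Rightarrow> real \<Rightarrow> 'x).
      (\<forall>i<k. tg (V i) (s i)) \<and> topspace (prod_topology TX TX) \<subseteq> (\<Union>i<k. V i)) \<longleftrightarrow>
      (\<exists>V :: nat \<Rightarrow> 'x set. (\<forall>i<k. cg (V i)) \<and> topspace TX \<subseteq> (\<Union>i<k. V i))" for k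
  proof
    assume "\<exists>(V :: nat \<Rightarrow> ('x \<times> 'x) set) (s :: nat \<Rightarrow> 'x \<times> 'x \<Rightarrow> real \<Rightarrow> 'x).
      (\<forall>i<k. tg (V i) (s i)) \<and> topspace (prod_topology TX TX) \<subseteq> (\<Union>i<k. V i)"
    then show "\<exists>V :: nat \<Rightarrow> 'x set. (\<forall>i<k. cg (V i)) \<and> topspace TX \<subseteq> (\<Union>i<k. V i)"
      by (elim exE conjE) (rule A)
  next
    assume "\<exists>V :: nat \<Rightarrow> 'x set. (\<forall>i<k. cg (V i)) \<and> topspace TX \<subseteq> (\<Union>i<k. V i)"
    then show "\<exists>(V :: nat \<Rightarrow> ('x \<times> 'x) set) (s :: nat \<Rightarrow> 'x \<times> 'x \<Rightarrow> real \<Rightarrow> 'x).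
      (\<forall>i<k. tg (V i) (s i)) \<and> topspace (prod_topology TX TX) \<subseteq> (\<Union>i<k. V i)"
      by (elim exE conjE) (rule B)
  qed
  show ?thesis unfolding TCeq Ceq eq ..
qed

end

theorem proposition5p12:
  fixes G :: "'g monoid" and TG :: "'g topology"
    and X :: "'x monoid" and TX :: "'x topology"
    and act :: "'g \<Rightarrow> 'x \<Rightarrow> 'x"
  assumes "topological_group G TG" and "compact_space TG" and "Hausdorff_space TG"
    and "topological_group X TX" and "Hausdorff_space TX"
    and "continuous_action G TG TX act"
    and "\<forall>g\<in>carrier G. act g \<in> hom X X"
    and "G_connected G TG TX act"
  shows "TC_G G TX act = cat_G G TX act"
proof -
  interpret S G TG X TX act using assms by (simp add: S_def)
  show ?thesis by (rule main)
qed

end
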